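(* Let $q\neq-1$ be real and $n\ge0$. Then $$T_n(x,s,q)=\sum_{k=0}^{\lfloor n/2\rfloor}q^{\binom{n-2k}{2}}\begin{bmatrix} n\\ 2k\end{bmatrix}x^{n-2k}\prod_{j=0}^{k-1}(x^2+q^{2j+1}s)$$ and $$U_n(x,s,q)=\sum_{k=0}^{\lfloor n/2\rfloor}q^{\binom{n-2k}{2}}\begin{bmatrix} n+1\\ 2k+1\end{bmatrix}x^{n-2k}\prod_{j=0}^{k-1}(x^2+q^{2j+1}s).$$
   Context: $T_0=1$, $T_1=x$, $T_n(x,s,q)=(1+q^{n-1})x\,T_{n-1}(x,s,q)+q^{n-1}s\,T_{n-2}(x,s,q)$ for $n\ge2$; $U_{-1}=0$, $U_0=1$, $U_n(x,s,q)=(1+q^{n})x\,U_{n-1}(x,s,q)+q^{n-1}s\,U_{n-2}(x,s,q)$ for $n\ge1$. Notation: $[m]=1+q+\cdots+q^{m-1}$, $[m]!=[1]\cdots[m]$, $\begin{bmatrix} m\\ j\end{bmatrix}=\frac{[m]!}{[j]![m-j]!}$; $\binom{0}{2}=\binom12=0$; empty products equal $1$. *)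

theory Defs
  imports Complex_Main
begin

definition qint :: "real \<Rightarrow> nat \<Rightarrow> real" where
  "qint q m = (\<Sum>i<m. q ^ i)"

definition qfact :: "real \<Rightarrow> nat \<Rightarrow> real" where
  "qfact q m = (\<Prod>i\<in>{1..m}. qint q i)"

definition qbinom :: "real \<Rightarrow> nat \<Rightarrow> nat \<Rightarrow> real" where
  "qbinom q m j = qfact q m / (qfact q j * qfact q (m - j))"

fun T :: "nat \<Rightarrow> real \<Rightarrow> real \<Rightarrow> real \<Rightarrow> real" where
  "T 0 x s q = 1"
| "T (Suc 0) x s q = x"
| "T (Suc (Suc n)) x s q =
     (1 + q ^ (Suc n)) * x * T (Suc n) x s q + q ^ (Suc n) * s * T n x s q"

text \<open>U_n with U_{-1} = 0, so U_1 = (1+q) x.\<close>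
fun U :: "nat \<Rightarrow> real \<Rightarrow> real \<Rightarrow> real \<Rightarrow> real" where
  "U 0 x s q = 1"
| "U (Suc 0) x s q = (1 + q) * x"
| "U (Suc (Suc n)) x s q =
     (1 + q ^ (Suc (Suc n))) * x * U (Suc n) x s q + q ^ (Suc n) * s * U n x s q"

end

theory Submission
  imports Defs
begin

lemma key_alg: fixes q u v A B :: real
  assumes "(1-q)*u = 1-A" "(1-q)*v = 1-B"
  shows "A*q*(u + A*(v+B*(1+q)))*(u + A*(v+B*(1+q+q^2))) = (1 + A*B*q^2)*(u + A*(v+B*(1+q)))*(u+A*(1+q)) + A^2*q^3*(v+B)*v - (u+A)*(u+A*(1+q))"
  using assms by algebra

lemma qint_0[simp]: "qint q 0 = 0" by (simp add: qint_def)
lemma qint_Suc: "qint q (Suc m) = qint q m + q^m" by (simp add: qint_def)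
lemma qint_add: "qint q (a+b) = qint q a + q^a * qint q b"
proof (induction b)
  case (Suc b)
  have "qint q (a + Suc b) = qint q (a+b) + q^(a+b)" by (simp add: qint_Suc)
  also have "\<dots> = qint q a + q^a * qint q (Suc b)" using Suc by (simp add: qint_Suc algebra_simps power_add)
  finally show ?case .
qed simp
lemma qint_mult: "(1-q)*qint q m = 1 - q^m"
proof (induction m)
  case (Suc m)
  have "(1-q)*qint q (Suc m) = (1-q)*qint q m + (1-q)*q^m" by (simp add: qint_Suc algebra_simps)
  also have "\<dots> = 1 - q^Suc m" using Suc by (simp add: algebra_simps)
  finally show ?case .
qed simp
lemma qint_1[simp]: "qint q 1 = 1" by (simp add: qint_def)
lemma qint_2: "qint q 2 = 1+q" by (simp add: qint_def numeral_2_eq_2)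
lemma qint_3: "qint q 3 = 1+q+q^2" by (simp add: qint_def numeral_3_eq_3 power2_eq_square)

lemma qint_nz: assumes "q \<noteq> -1" "m \<ge> 1" shows "qint q m \<noteq> 0"
proof
  assume z: "qint q m = 0"
  show False
  proof (cases "q = 1")
    case True
    then have "qint q m = real m" by (simp add: qint_def)
    with z assms show False by simp
  next
    case False
    from qint_mult[of q m] z have "q^m = 1" by simp
    then have "\<bar>q\<bar>^m = 1" by (metis power_abs abs_one)
    then have "\<bar>q\<bar> = 1" using assms(2) power_eq_imp_eq_base[of "\<bar>q\<bar>" m 1] by simp
    with False assms(1) show False by (auto simp: abs_if split: if_splits)
  qed
qed

lemma qfact_0[simp]: "qfact q 0 = 1" by (simp add: qfact_def)
lemma qfact_Suc: "qfact q (Suc m) = qfact q m * qint q (Suc m)"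
  by (simp add: qfact_def prod.cl_ivl_Suc)
lemma qfact_nz: assumes "q \<noteq> -1" shows "qfact q m \<noteq> 0"
  using assms by (induction m) (simp_all add: qfact_Suc qint_nz)

lemma key: "q^(m+1) * qint q (m+l+2) * qint q (m+l+3) =
   (1+q^(m+l+2)) * qint q (m+l+2) * qint q (m+2) + q^(2*m+3) * qint q (l+1) * qint q l
   - qint q (m+1) * qint q (m+2)"
proof -
  have e1: "qint q (m+l+2) = qint q m + q^m*(qint q l + q^l*(1+q))"
    by (simp only: add.assoc qint_add qint_2)
  have e2: "qint q (m+l+3) = qint q m + q^m*(qint q l + q^l*(1+q+q^2))"
    by (simp only: add.assoc qint_add qint_3)
  have e3: "qint q (m+2) = qint q m + q^m*(1+q)" by (simp only: qint_add qint_2)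
  have e4: "qint q (m+1) = qint q m + q^m" by (simp only: qint_add qint_1 mult_1_right)
  have e5: "qint q (l+1) = qint q l + q^l" by (simp only: qint_add qint_1 mult_1_right)
  have p1: "q^(m+1) = q^m*q" by simp
  have p2: "q^(m+l+2) = q^m*q^l*q^2" by (simp only: power_add)
  have p3: "q^(2*m+3) = (q^m)^2*q^3" by (simp add: power_add power_mult[symmetric] mult.commute)
  note p = p1 p2 p3
  show ?thesis unfolding e1 e2 e3 e4 e5 p
    by (rule key_alg[OF qint_mult qint_mult])
qed

lemma choose2_Suc: "Suc n choose 2 = (n choose 2) + n"
  by (simp add: numeral_2_eq_2)

lemma coef_gen:
  fixes q :: real
  assumes q: "q \<noteq> -1"
  shows "q^((m+2) choose 2) * qbinom q (m+p+4) (p+2) =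
    (1+q^(m+p+3)) * (q^((m+1) choose 2) * qbinom q (m+p+3) (p+2))
    + q^(m+2) * (q^((m+2) choose 2) * qbinom q (m+p+2) p)
    - q^m * (q^(m choose 2) * qbinom q (m+p+2) (p+2))"
proof -
  define I where "I = qint q"
  define F where "F = qfact q (m+p+2)"
  define a where "a = qfact q p"
  define b where "b = qfact q m"
  define Z where "Z = q^(m choose 2)"
  have nz: "I k \<noteq> 0" if "k \<ge> 1" for k using qint_nz[OF q that] by (simp add: I_def)
  have nzF: "F \<noteq> 0" "a \<noteq> 0" "b \<noteq> 0" using qfact_nz[OF q] by (simp_all add: F_def a_def b_def)
  have f1: "qfact q (m+p+3) = F * I (m+p+3)"
    using qfact_Suc[of q "m+p+2"] by (simp add: F_def I_def numeral_3_eq_3 numeral_2_eq_2)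
  have f2: "qfact q (m+p+4) = F * I (m+p+3) * I (m+p+4)"
    using qfact_Suc[of q "m+p+3"] f1 by (simp add: I_def eval_nat_numeral)
  have fm1: "qfact q (m+1) = b * I (m+1)" using qfact_Suc[of q m] by (simp add: b_def I_def)
  have fm2: "qfact q (m+2) = b * I (m+1) * I (m+2)" using qfact_Suc[of q "m+1"] fm1 by (simp add: I_def eval_nat_numeral)
  have fp2: "qfact q (p+2) = a * I (p+1) * I (p+2)"
    using qfact_Suc[of q "p+1"] qfact_Suc[of q p] by (simp add: a_def I_def eval_nat_numeral)
  have z1: "q^((m+1) choose 2) = Z * q^m" using choose2_Suc[of m] by (simp add: Z_def power_add)
  have z2: "q^((m+2) choose 2) = Z * (q^m*q^m*q)" using choose2_Suc[of "m+1"] choose2_Suc[of m]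
    by (simp add: Z_def power_add eval_nat_numeral mult_2)
  define K where "K = Z*q^m*F/(a*b*I(p+1)*I(p+2)*I(m+1)*I(m+2))"
  have L: "q^((m+2) choose 2) * qbinom q (m+p+4) (p+2) = K * (q^m*q*I(m+p+3)*I(m+p+4))"
  proof -
    have "qbinom q (m+p+4) (p+2) = F * I (m+p+3) * I (m+p+4) / (a * I (p+1) * I (p+2) * (b * I (m+1) * I (m+2)))"
      unfolding qbinom_def using f2 fp2 fm2 by (simp add: add.commute add.left_commute)
    then show ?thesis using nz nzF unfolding z2 K_def by (simp add: field_simps)
  qed
  have R1: "q^((m+1) choose 2) * qbinom q (m+p+3) (p+2) = K * (I(m+p+3)*I(m+2))"
  proof -
    have "qbinom q (m+p+3) (p+2) = F * I (m+p+3) / (a * I (p+1) * I (p+2) * (b * I (m+1)))"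
      unfolding qbinom_def using f1 fp2 fm1 by (simp add: add.commute add.left_commute)
    then show ?thesis using nz nzF unfolding z1 K_def by (simp add: field_simps)
  qed
  have R2: "q^(m+2) * (q^((m+2) choose 2) * qbinom q (m+p+2) p) = K * (q^m*q^m*(q*q*q) * I(p+2)*I(p+1))"
  proof -
    have qq: "q^(m+2) = q^m*(q*q)" by (simp add: power_add power2_eq_square)
    have "qbinom q (m+p+2) p = F / (a * (b * I (m+1) * I (m+2)))"
      unfolding qbinom_def using fm2 by (simp add: F_def a_def add.commute add.left_commute)
    then show ?thesis using nz nzF unfolding z2 K_def qq by (simp add: field_simps)
  qed
  have R3: "q^m * (q^(m choose 2) * qbinom q (m+p+2) (p+2)) = K * (I(m+1)*I(m+2))"
  proof -
    have "qbinom q (m+p+2) (p+2) = F / (a * I (p+1) * I (p+2) * b)"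
      unfolding qbinom_def using fp2 by (simp add: F_def b_def add.commute add.left_commute)
    then show ?thesis using nz nzF unfolding Z_def K_def by (simp add: field_simps)
  qed
  have e23: "2*m+3 = m+m+3" by simp
  have qq3: "q^(2*m+3) = q^m*q^m*(q*q*q)" by (simp only: e23 power_add power3_eq_cube)
  have k: "q^m*q*I(m+p+3)*I(m+p+4) = (1+q^(m+p+3)) * (I(m+p+3)*I(m+2)) + q^m*q^m*(q*q*q) * I(p+2)*I(p+1) - I(m+1)*I(m+2)"
    using key[of q m "p+1"] unfolding I_def qq3 by (simp add: algebra_simps eval_nat_numeral)
  show ?thesis unfolding L R1 R2 R3 k by (simp add: algebra_simps)
qed

lemma sum_ext: fixes t :: "nat \<Rightarrow> real"
  assumes "\<And>k. k \<ge> N \<Longrightarrow> t k = 0" "N \<le> M"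
  shows "(\<Sum>k<M. t k) = (\<Sum>k<N. t k)"
  by (rule sum.mono_neutral_right) (use assms in auto)

lemma gen:
  fixes x s q :: real and c :: "nat \<Rightarrow> nat \<Rightarrow> real" and V :: "nat \<Rightarrow> real" and e :: nat
    and P :: "nat \<Rightarrow> real"
  assumes Pdef: "\<And>k. P k = (\<Prod>j\<in>{0..<k}. x^2 + q^(2*j+1)*s)"
  and zero: "\<And>n k. n < 2*k \<Longrightarrow> c n k = 0"
  and b0: "V 0 = c 0 0" and b1: "V 1 = c 1 0 * x"
  and rec: "\<And>n. V (n+2) = (1+q^(n+e))*x*V(n+1) + q^(n+1)*s*V n"
  and coef: "\<And>n k. c (n+2) k = (1+q^(n+e))*c (n+1) k + (if k=0 then 0 else q^(n+2-2*k)*c n (k-1)) - q^(n-2*k)*c n k"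
  shows "V n = (\<Sum>k<n+1. c n k * x^(n-2*k) * P k)"
proof -
  define S where "S n = (\<Sum>k<n+1. c n k * x^(n-2*k) * P k)" for n
  have ext: "(\<Sum>k<M. c n k * x^(n-2*k) * P k) = S n" if "n+1 \<le> M" for n M
    unfolding S_def by (rule sum_ext) (use that zero in auto)
  have P0: "P 0 = 1" by (simp add: Pdef)
  have "V n = S n \<and> V (n+1) = S (n+1)"
  proof (induction n)
    case 0
    have "S 1 = c 1 0 * x" using zero[of 1 1] by (simp add: S_def P0)
    then show ?case using b0 b1 by (simp add: S_def P0)
  next
    case (Suc n)
    define N where "N = n+3"
    have IH0: "V n = (\<Sum>k<N. c n k * x^(n-2*k) * P k)" using Suc ext[of n N] by (simp add: N_def)
    have IH1: "V (n+1) = (\<Sum>k<N. c (n+1) k * x^(n+1-2*k) * P k)" using Suc ext[of "n+1" N] by (simp add: N_def)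
    have A: "(1+q^(n+e))*x*V(n+1) = (\<Sum>k<N. (1+q^(n+e))*c (n+1) k * x^(n+2-2*k) * P k)"
      unfolding IH1 sum_distrib_left
    proof (rule sum.cong[OF refl])
      fix k assume "k \<in> {..<N}"
      show "(1+q^(n+e))*x*(c (n+1) k * x^(n+1-2*k) * P k) = (1+q^(n+e))*c (n+1) k * x^(n+2-2*k) * P k"
      proof (cases "2*k \<le> n+1")
        case True
        then have "n+2-2*k = Suc (n+1-2*k)" by simp
        then have "x^(n+2-2*k) = x * x^(n+1-2*k)" by simp
        then show ?thesis by simp
      next
        case False then show ?thesis using zero[of "n+1" k] by simp
      qed
    qed
    define g where "g k = (if k=0 then 0 else q^(n+2-2*k)*c n (k-1)*x^(n+2-2*k)*P k)" for k
    have B: "q^(n+1)*s*V n = (\<Sum>k<N. q^(n-2*k)*c n k*x^(n-2*k)*P (Suc k)) - (\<Sum>k<N. q^(n-2*k)*c n k*x^(n+2-2*k)*P k)"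
      unfolding IH0 sum_distrib_left sum_subtractf[symmetric]
    proof (rule sum.cong[OF refl])
      fix k assume "k \<in> {..<N}"
      show "q^(n+1)*s*(c n k * x^(n-2*k) * P k) = q^(n-2*k)*c n k*x^(n-2*k)*P (Suc k) - q^(n-2*k)*c n k*x^(n+2-2*k)*P k"
      proof (cases "2*k \<le> n")
        case True
        have d1: "n+2-2*k = (n-2*k) + 2" using True by simp
        have d2: "n+1 = (n-2*k) + (2*k+1)" using True by simp
        have e1: "x^(n+2-2*k) = x^(n-2*k) * x^2" unfolding d1 by (rule power_add)
        have e2: "q^(n+1) = q^(n-2*k) * q^(2*k+1)" by (subst d2, rule power_add)
        have e3: "P (Suc k) = P k * (x^2 + q^(2*k+1)*s)" by (simp add: Pdef)
        show ?thesis unfolding e1 e2 e3 by (simp add: algebra_simps)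
      next
        case False then show ?thesis using zero[of n k] by simp
      qed
    qed
    have C: "(\<Sum>k<N. q^(n-2*k)*c n k*x^(n-2*k)*P (Suc k)) = (\<Sum>k<N. g k)"
    proof -
      have "(\<Sum>k<N. q^(n-2*k)*c n k*x^(n-2*k)*P (Suc k)) = (\<Sum>k<N. g (Suc k))"
        by (simp add: g_def)
      also have "\<dots> = (\<Sum>k<Suc N. g k)"
      proof -
        have g0: "g 0 = 0" by (simp add: g_def)
        show ?thesis unfolding sum.lessThan_Suc_shift g0 by simp
      qed
      also have "\<dots> = (\<Sum>k<N. g k) + g N" by simp
      also have "g N = 0" using zero[of n "N-1"] by (simp add: g_def N_def)
      finally show ?thesis by simp
    qed
    have "V (n+2) = (\<Sum>k<N. ((1+q^(n+e))*c (n+1) k + (if k=0 then 0 else q^(n+2-2*k)*c n (k-1)) - q^(n-2*k)*c n k) * x^(n+2-2*k) * P k)"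
      unfolding rec A B C g_def sum_subtractf[symmetric] sum.distrib[symmetric]
      by (rule sum.cong[OF refl]) (auto simp: algebra_simps)
    also have "\<dots> = (\<Sum>k<N. c (n+2) k * x^(n+2-2*k) * P k)" by (simp only: coef)
    also have "\<dots> = S (n+2)" by (rule ext) (simp add: N_def)
    finally show ?case using Suc by simp
  qed
  then show ?thesis by (simp add: S_def)
qed

lemma qint_Suc0[simp]: "qint q (Suc 0) = 1" by (simp add: qint_def)
lemma qint_Suc': "qint q (Suc m) = 1 + q * qint q m"
proof -
  have "qint q (1+m) = qint q 1 + q^1*qint q m" by (rule qint_add)
  then show ?thesis by simp
qed

lemma qfact_1[simp]: "qfact q 1 = 1" by (simp add: qfact_def)

lemma qbinom_0: "q \<noteq> -1 \<Longrightarrow> qbinom q m 0 = 1"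
  using qfact_nz[of q m] by (simp add: qbinom_def)
lemma qbinom_refl: "q \<noteq> -1 \<Longrightarrow> qbinom q m m = 1"
  using qfact_nz[of q m] by (simp add: qbinom_def)
lemma qbinom_Suc_self: "q \<noteq> -1 \<Longrightarrow> qbinom q (Suc m) m = qint q (Suc m)"
  using qfact_nz[of q m] by (simp add: qbinom_def qfact_Suc Suc_diff_le)
lemma qbinom_1: "q \<noteq> -1 \<Longrightarrow> qbinom q (Suc m) (Suc 0) = qint q (Suc m)"
  using qfact_nz[of q m] by (simp add: qbinom_def qfact_Suc)

definition cT :: "real \<Rightarrow> nat \<Rightarrow> nat \<Rightarrow> real" where
  "cT q n k = (if 2*k \<le> n then q^((n-2*k) choose 2) * qbinom q n (2*k) else 0)"
definition cU :: "real \<Rightarrow> nat \<Rightarrow> nat \<Rightarrow> real" where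
  "cU q n k = (if 2*k \<le> n then q^((n-2*k) choose 2) * qbinom q (n+1) (2*k+1) else 0)"

lemma coefT:
  assumes q: "q \<noteq> -1"
  shows "cT q (n+2) k = (1+q^(n+1))*cT q (n+1) k + (if k=0 then 0 else q^(n+2-2*k)*cT q n (k-1)) - q^(n-2*k)*cT q n k"
proof (cases k)
  case 0
  have c1: "Suc n choose 2 = (n choose 2) + n" using choose2_Suc[of n] by simp
  have c2: "Suc (Suc n) choose 2 = (n choose 2) + n + n + 1" using choose2_Suc[of "n+1"] choose2_Suc[of n] by simp
  show ?thesis using 0 unfolding cT_def
    by (simp add: qbinom_0[OF q] c1 c2 power_add algebra_simps)
next
  case (Suc k')
  consider "n + 2 < 2*k" | "n+2 = 2*k" | "n+1 = 2*k" | "2*k \<le> n" by linarith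
  then show ?thesis
  proof cases
    case 1 then show ?thesis using Suc by (simp add: cT_def)
  next
    case 2
    then have n: "n = 2*k'" using Suc by simp
    show ?thesis using Suc unfolding cT_def n by (simp add: qbinom_refl[OF q])
  next
    case 3
    define r where "r = 2*k'"
    then have n: "n = Suc r" using Suc 3 by simp
    have kk: "2*k = Suc (Suc r)" using Suc r_def by simp
    have a: "qbinom q (Suc (Suc (Suc r))) (Suc (Suc r)) = qint q (Suc (Suc (Suc r)))"
      by (rule qbinom_Suc_self[OF q])
    have b: "qbinom q (Suc r) r = qint q (Suc r)" by (rule qbinom_Suc_self[OF q])
    have ch: "Suc 0 choose 2 = 0" "0 choose 2 = 0" by (simp_all add: numeral_2_eq_2)
    have km: "2*(k-1) = r" using kk by simp
    have h: "q^r = 1 + q*qint q r - qint q r" using qint_Suc[of q r] qint_Suc'[of q r] by simp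
    show ?thesis using Suc unfolding cT_def n kk km
      by (simp add: qbinom_refl[OF q] a b qint_Suc' ch h algebra_simps)
  next
    case 4
    define m where "m = n - 2*k"
    have n: "n = m + 2*k' + 2" using 4 Suc by (simp add: m_def)
    have v1: "cT q (n+2) k = q^((m+2) choose 2) * qbinom q (m+2*k'+4) (2*k'+2)"
      unfolding cT_def n Suc by (simp add: eval_nat_numeral)
    have v2: "cT q (n+1) k = q^((m+1) choose 2) * qbinom q (m+2*k'+3) (2*k'+2)"
      unfolding cT_def n Suc by (simp add: eval_nat_numeral)
    have v3: "cT q n (k-1) = q^((m+2) choose 2) * qbinom q (m+2*k'+2) (2*k')"
      unfolding cT_def n Suc by (simp add: eval_nat_numeral)
    have v4: "cT q n k = q^(m choose 2) * qbinom q (m+2*k'+2) (2*k'+2)"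
      unfolding cT_def n Suc by (simp add: eval_nat_numeral)
    have w: "n+1 = m+2*k'+3" "n+2-2*k = m+2" "n-2*k = m" using n Suc by simp_all
    show ?thesis unfolding v1 v2 v3 v4 unfolding w using Suc coef_gen[OF q, of m "2*k'"] by simp
  qed
qed

lemma qint_SS0: "qint q (Suc (Suc 0)) = 1 + q" using qint_2[of q] by (simp add: numeral_2_eq_2)

lemma kU0: "q^(n+1)*qint q (n+3) = (1+q^(n+2))*qint q (n+2) - qint q (n+1)"
proof -
  define u where "u = qint q (n+1)"
  define A where "A = q^(n+1)"
  have h: "u + A = 1 + q*u" using qint_Suc[of q "n+1"] qint_Suc'[of q "n+1"] by (simp add: u_def A_def)
  have i2: "qint q (n+2) = u + A" using qint_Suc[of q "n+1"] by (simp add: u_def A_def)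
  have i3: "qint q (n+3) = u + A*(1+q)" using qint_add[of q "n+1" 2] by (simp add: u_def A_def qint_SS0 eval_nat_numeral)
  have p: "q^(n+2) = A*q" by (simp add: A_def)
  show ?thesis unfolding i2 i3 p u_def[symmetric] A_def[symmetric] using h by algebra
qed

lemma coefU:
  assumes q: "q \<noteq> -1"
  shows "cU q (n+2) k = (1+q^(n+2))*cU q (n+1) k + (if k=0 then 0 else q^(n+2-2*k)*cU q n (k-1)) - q^(n-2*k)*cU q n k"
proof (cases k)
  case 0
  have c1: "Suc n choose 2 = (n choose 2) + n" using choose2_Suc[of n] by simp
  have c2: "Suc (Suc n) choose 2 = (n choose 2) + n + n + 1" using choose2_Suc[of "n+1"] choose2_Suc[of n] by simp
  define Z where "Z = q^(n choose 2)"
  have v1: "cU q (n+2) 0 = Z * q^n * (q^(n+1) * qint q (n+3))"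
    unfolding cU_def using c2 by (simp add: qbinom_1[OF q] Z_def power_add eval_nat_numeral)
  have v2: "cU q (n+1) 0 = Z * q^n * qint q (n+2)"
    unfolding cU_def using c1 by (simp add: qbinom_1[OF q] Z_def power_add eval_nat_numeral)
  have v3: "cU q n 0 = Z * qint q (n+1)"
    unfolding cU_def by (simp add: qbinom_1[OF q] Z_def)
  have e: "Z * q^n * (q^(n+1) * qint q (n+3)) = Z*q^n*((1+q^(n+2))*qint q (n+2) - qint q (n+1))"
    using kU0[of q n] by simp
  show ?thesis unfolding 0 v1 v2 v3 e by (simp add: algebra_simps)
next
  case (Suc k')
  consider "n + 2 < 2*k" | "n+2 = 2*k" | "n+1 = 2*k" | "2*k \<le> n" by linarith
  then show ?thesis
  proof cases
    case 1 then show ?thesis using Suc by (simp add: cU_def)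
  next
    case 2
    then have n: "n = 2*k'" using Suc by simp
    show ?thesis using Suc unfolding cU_def n by (simp add: qbinom_refl[OF q])
  next
    case 3
    define r where "r = 2*k'"
    then have n: "n = Suc r" using Suc 3 by simp
    have kk: "2*k = Suc (Suc r)" using Suc r_def by simp
    have a: "qbinom q (Suc (Suc (Suc (Suc r)))) (Suc (Suc (Suc r))) = qint q (Suc (Suc (Suc (Suc r))))"
      by (rule qbinom_Suc_self[OF q])
    have b: "qbinom q (Suc (Suc r)) (Suc r) = qint q (Suc (Suc r))" by (rule qbinom_Suc_self[OF q])
    have ch: "Suc 0 choose 2 = 0" "0 choose 2 = 0" by (simp_all add: numeral_2_eq_2)
    have km: "2*(k-1) = r" using kk by simp
    have h: "q^r = 1 + q*qint q r - qint q r" using qint_Suc[of q r] qint_Suc'[of q r] by simp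
    show ?thesis using Suc unfolding cU_def n kk km
      by (simp add: qbinom_refl[OF q] a b qint_Suc' ch h algebra_simps)
  next
    case 4
    define m where "m = n - 2*k"
    have n: "n = m + 2*k' + 2" using 4 Suc by (simp add: m_def)
    have v1: "cU q (n+2) k = q^((m+2) choose 2) * qbinom q (m+(2*k'+1)+4) ((2*k'+1)+2)"
      unfolding cU_def n Suc by (simp add: eval_nat_numeral)
    have v2: "cU q (n+1) k = q^((m+1) choose 2) * qbinom q (m+(2*k'+1)+3) ((2*k'+1)+2)"
      unfolding cU_def n Suc by (simp add: eval_nat_numeral)
    have v3: "cU q n (k-1) = q^((m+2) choose 2) * qbinom q (m+(2*k'+1)+2) (2*k'+1)"
      unfolding cU_def n Suc by (simp add: eval_nat_numeral)
    have v4: "cU q n k = q^(m choose 2) * qbinom q (m+(2*k'+1)+2) ((2*k'+1)+2)"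
      unfolding cU_def n Suc by (simp add: eval_nat_numeral)
    have w: "n+2 = m+(2*k'+1)+3" "n+2-2*k = m+2" "n-2*k = m" using n Suc by simp_all
    show ?thesis unfolding v1 v2 v3 v4 unfolding w using Suc coef_gen[OF q, of m "2*k'+1"] by simp
  qed
qed

lemma conv:
  fixes c :: "nat \<Rightarrow> real" and f :: "nat \<Rightarrow> real"
  assumes "\<And>k. n < 2*k \<Longrightarrow> c k = 0" "\<And>k. 2*k \<le> n \<Longrightarrow> c k = d k"
  shows "(\<Sum>k<n+1. c k * f k) = (\<Sum>k\<in>{0..n div 2}. d k * f k)"
proof -
  have "(\<Sum>k<n+1. c k * f k) = (\<Sum>k\<in>{0..n div 2}. c k * f k)"
    by (rule sum.mono_neutral_right) (use assms(1) in auto)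
  also have "\<dots> = (\<Sum>k\<in>{0..n div 2}. d k * f k)"
    by (rule sum.cong[OF refl]) (use assms(2) in auto)
  finally show ?thesis .
qed

theorem theorem2p7:
  fixes x s q :: real and n :: nat
  assumes "q \<noteq> -1"
  shows "(T n x s q = (\<Sum>k\<in>{0..n div 2}. q ^ ((n - 2*k) choose 2) * qbinom q n (2*k)
            * x ^ (n - 2*k) * (\<Prod>j\<in>{0..<k}. x\<^sup>2 + q ^ (2*j+1) * s))) \<and>
         (U n x s q = (\<Sum>k\<in>{0..n div 2}. q ^ ((n - 2*k) choose 2) * qbinom q (n+1) (2*k+1)
            * x ^ (n - 2*k) * (\<Prod>j\<in>{0..<k}. x\<^sup>2 + q ^ (2*j+1) * s)))"
proof
  define P where "P k = (\<Prod>j\<in>{0..<k}. x^2 + q^(2*j+1)*s)" for k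
  have gT: "T n x s q = (\<Sum>k<n+1. cT q n k * x^(n-2*k) * P k)"
  proof (rule gen[where e=1])
    show "\<And>k. P k = (\<Prod>j\<in>{0..<k}. x^2 + q^(2*j+1)*s)" by (simp add: P_def)
    show "\<And>n k. n < 2*k \<Longrightarrow> cT q n k = 0" by (simp add: cT_def)
    show "T 0 x s q = cT q 0 0" by (simp add: cT_def qbinom_refl[OF assms] numeral_2_eq_2)
    show "T 1 x s q = cT q 1 0 * x" by (simp add: cT_def qbinom_0[OF assms] numeral_2_eq_2)
    show "\<And>n. T (n+2) x s q = (1+q^(n+1))*x*T (n+1) x s q + q^(n+1)*s*T n x s q" by simp
    show "\<And>n k. cT q (n+2) k = (1+q^(n+1))*cT q (n+1) k + (if k=0 then 0 else q^(n+2-2*k)*cT q n (k-1)) - q^(n-2*k)*cT q n k"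
      by (rule coefT[OF assms])
  qed
  have gU: "U n x s q = (\<Sum>k<n+1. cU q n k * x^(n-2*k) * P k)"
  proof (rule gen[where e=2])
    show "\<And>k. P k = (\<Prod>j\<in>{0..<k}. x^2 + q^(2*j+1)*s)" by (simp add: P_def)
    show "\<And>n k. n < 2*k \<Longrightarrow> cU q n k = 0" by (simp add: cU_def)
    show "U 0 x s q = cU q 0 0" by (simp add: cU_def qbinom_refl[OF assms] numeral_2_eq_2)
    show "U 1 x s q = cU q 1 0 * x" using qbinom_Suc_self[OF assms, of 1] by (simp add: cU_def qint_SS0 numeral_2_eq_2)
    show "\<And>n. U (n+2) x s q = (1+q^(n+2))*x*U (n+1) x s q + q^(n+1)*s*U n x s q" by simp
    show "\<And>n k. cU q (n+2) k = (1+q^(n+2))*cU q (n+1) k + (if k=0 then 0 else q^(n+2-2*k)*cU q n (k-1)) - q^(n-2*k)*cU q n k"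
      by (rule coefU[OF assms])
  qed
  show "T n x s q = (\<Sum>k\<in>{0..n div 2}. q ^ ((n - 2*k) choose 2) * qbinom q n (2*k)
            * x ^ (n - 2*k) * (\<Prod>j\<in>{0..<k}. x\<^sup>2 + q ^ (2*j+1) * s))"
  proof -
    have "(\<Sum>k<n+1. cT q n k * (x^(n-2*k)*P k)) = (\<Sum>k\<in>{0..n div 2}. (q^((n-2*k) choose 2) * qbinom q n (2*k)) * (x^(n-2*k)*P k))"
      by (rule conv) (simp_all add: cT_def)
    then show ?thesis unfolding gT by (simp add: P_def mult.assoc)
  qed
  show "U n x s q = (\<Sum>k\<in>{0..n div 2}. q ^ ((n - 2*k) choose 2) * qbinom q (n+1) (2*k+1)
            * x ^ (n - 2*k) * (\<Prod>j\<in>{0..<k}. x\<^sup>2 + q ^ (2*j+1) * s))"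
  proof -
    have "(\<Sum>k<n+1. cU q n k * (x^(n-2*k)*P k)) = (\<Sum>k\<in>{0..n div 2}. (q^((n-2*k) choose 2) * qbinom q (n+1) (2*k+1)) * (x^(n-2*k)*P k))"
      by (rule conv) (simp_all add: cU_def)
    then show ?thesis unfolding gU by (simp add: P_def mult.assoc)
  qed
qed

end
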